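(* Let $G$ be any group and $f:G\to\mathbb R_{\ge0}$ a subadditive function ($f(xy)\le f(x)+f(y)$ for all $x,y$) with $f(x)=0$ iff $x=\mathrm{id}$, and suppose $f(h^{-1}gh)=f(g)$ for all $g,h\in G$. Then for any $x\le_f z$ in $G$, the map $y\mapsto xy^{-1}z$ maps the interval $[x,z]_f=\{y: x\le_f y\le_f z\}$ to itself and is a poset antiautomorphism of $[x,z]_f$.
   Context: For such $f$, $x\le_f y$ means $f(x)+f(x^{-1}y)=f(y)$; this is a partial order on $G$. *)

theory Defs
  imports Complex_Main "HOL-Algebra.Group"
begin

definition f_le :: "('a, 'b) monoid_scheme \<Rightarrow> ('a \<Rightarrow> real) \<Rightarrow> 'a \<Rightarrow> 'a \<Rightarrow> bool" where
  "f_le G f x y \<longleftrightarrow> f x + f (inv\<^bsub>G\<^esub> x \<otimes>\<^bsub>G\<^esub> y) = f y"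

definition f_interval :: "('a, 'b) monoid_scheme \<Rightarrow> ('a \<Rightarrow> real) \<Rightarrow> 'a \<Rightarrow> 'a \<Rightarrow> 'a set" where
  "f_interval G f x z = {y \<in> carrier G. f_le G f x y \<and> f_le G f y z}"

end

theory Submission
  imports Defs
begin

theorem mainTheorem3:
  fixes G (structure) and f :: "'a \<Rightarrow> real"
  assumes "group G"
    and nonneg: "\<And>x. x \<in> carrier G \<Longrightarrow> f x \<ge> 0"
    and subadd: "\<And>x y. x \<in> carrier G \<Longrightarrow> y \<in> carrier G \<Longrightarrow> f (x \<otimes> y) \<le> f x + f y"
    and zero_iff: "\<And>x. x \<in> carrier G \<Longrightarrow> (f x = 0 \<longleftrightarrow> x = \<one>)"
    and conj_inv: "\<And>g h. g \<in> carrier G \<Longrightarrow> h \<in> carrier G \<Longrightarrow> f (inv h \<otimes> g \<otimes> h) = f g"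
    and x: "x \<in> carrier G" and z: "z \<in> carrier G"
    and xz: "f_le G f x z"
  shows "(\<forall>y \<in> f_interval G f x z. x \<otimes> inv y \<otimes> z \<in> f_interval G f x z)
    \<and> bij_betw (\<lambda>y. x \<otimes> inv y \<otimes> z) (f_interval G f x z) (f_interval G f x z)
    \<and> (\<forall>a \<in> f_interval G f x z. \<forall>b \<in> f_interval G f x z.
          f_le G f a b \<longleftrightarrow> f_le G f (x \<otimes> inv b \<otimes> z) (x \<otimes> inv a \<otimes> z))"
proof -
  interpret group G by fact
  have c1[simp]: "a \<otimes> (inv a \<otimes> w) = w" if "a \<in> carrier G" "w \<in> carrier G" for a w
    using that by (simp add: m_assoc[symmetric])
  have c2[simp]: "inv a \<otimes> (a \<otimes> w) = w" if "a \<in> carrier G" "w \<in> carrier G" for a w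
    using that by (simp add: m_assoc[symmetric])
  define I where "I = f_interval G f x z"
  define \<phi> where "\<phi> = (\<lambda>y. x \<otimes> inv y \<otimes> z)"
  define \<psi> where "\<psi> = (\<lambda>y. z \<otimes> inv y \<otimes> x)"
  have sym: "f (u \<otimes> v) = f (v \<otimes> u)" if "u \<in> carrier G" "v \<in> carrier G" for u v
  proof -
    have "inv u \<otimes> (u \<otimes> v) \<otimes> u = v \<otimes> u" using that by (simp add: m_assoc[symmetric] inv_solve_left inv_solve_right)
    then show ?thesis using conj_inv[of "u \<otimes> v" u] that by simp
  qed
  have memI: "y \<in> I \<longleftrightarrow> y \<in> carrier G \<and> f x + f (inv x \<otimes> y) = f y \<and> f y + f (inv y \<otimes> z) = f z" for y
    unfolding I_def f_interval_def f_le_def by auto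
  have xz': "f x + f (inv x \<otimes> z) = f z" using xz unfolding f_le_def .
  have P: "f (\<phi> y) = f x + f (inv y \<otimes> z)" if y: "y \<in> I" for y
  proof -
    have yc: "y \<in> carrier G" and h1: "f x + f (inv x \<otimes> y) = f y" and h2: "f y + f (inv y \<otimes> z) = f z"
      using y memI by auto
    have up: "f (\<phi> y) \<le> f x + f (inv y \<otimes> z)"
      unfolding \<phi>_def using subadd[of x "inv y \<otimes> z"] x z yc by (simp add: m_assoc r_inv_ex inv_solve_left inv_solve_right)
    have "z = \<phi> y \<otimes> (inv z \<otimes> (y \<otimes> inv x) \<otimes> z)"
      unfolding \<phi>_def using x z yc by (simp add: m_assoc r_inv_ex inv_solve_left inv_solve_right)
    then have "f z \<le> f (\<phi> y) + f (inv z \<otimes> (y \<otimes> inv x) \<otimes> z)"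
      using subadd[of "\<phi> y" "inv z \<otimes> (y \<otimes> inv x) \<otimes> z"] x z yc unfolding \<phi>_def by simp
    also have "f (inv z \<otimes> (y \<otimes> inv x) \<otimes> z) = f (y \<otimes> inv x)" using conj_inv x z yc by simp
    also have "f (y \<otimes> inv x) = f (inv x \<otimes> y)" using sym x yc by simp
    finally show ?thesis using up h1 h2 by linarith
  qed
  have Pmem: "\<phi> y \<in> I" if y: "y \<in> I" for y
  proof -
    have yc: "y \<in> carrier G" and h1: "f x + f (inv x \<otimes> y) = f y" and h2: "f y + f (inv y \<otimes> z) = f z"
      using y memI by auto
    have e1: "inv x \<otimes> \<phi> y = inv y \<otimes> z" unfolding \<phi>_def using x z yc by (simp add: m_assoc[symmetric] inv_solve_left inv_solve_right)
    have e2: "inv (\<phi> y) \<otimes> z = inv z \<otimes> (y \<otimes> inv x) \<otimes> z"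
      unfolding \<phi>_def using x z yc by (simp add: inv_mult_group m_assoc inv_solve_left inv_solve_right)
    have "f (inv (\<phi> y) \<otimes> z) = f (inv x \<otimes> y)"
      unfolding e2 using conj_inv x z yc sym by simp
    then show ?thesis using P[OF y] e1 h1 h2 memI x z yc unfolding \<phi>_def by auto
  qed
  have Q: "f (\<psi> y) = f x + f (inv y \<otimes> z)" if y: "y \<in> I" for y
  proof -
    have yc: "y \<in> carrier G" and h1: "f x + f (inv x \<otimes> y) = f y" and h2: "f y + f (inv y \<otimes> z) = f z"
      using y memI by auto
    have up: "f (\<psi> y) \<le> f x + f (inv y \<otimes> z)"
      unfolding \<psi>_def using subadd[of "z \<otimes> inv y" x] x z yc sym[of "inv y" z] by simp
    have "z = \<psi> y \<otimes> (inv x \<otimes> y)"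
      unfolding \<psi>_def using x z yc by (simp add: m_assoc r_inv_ex inv_solve_left inv_solve_right)
    then have "f z \<le> f (\<psi> y) + f (inv x \<otimes> y)"
      using subadd[of "\<psi> y" "inv x \<otimes> y"] x z yc unfolding \<psi>_def by simp
    then show ?thesis using up h1 h2 by linarith
  qed
  have Qmem: "\<psi> y \<in> I" if y: "y \<in> I" for y
  proof -
    have yc: "y \<in> carrier G" and h1: "f x + f (inv x \<otimes> y) = f y" and h2: "f y + f (inv y \<otimes> z) = f z"
      using y memI by auto
    have e1: "inv x \<otimes> \<psi> y = inv x \<otimes> (z \<otimes> inv y) \<otimes> x" unfolding \<psi>_def using x z yc by (simp add: m_assoc r_inv_ex inv_solve_left inv_solve_right)
    have e2: "inv (\<psi> y) \<otimes> z = inv x \<otimes> y"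
      unfolding \<psi>_def using x z yc by (simp add: inv_mult_group m_assoc inv_solve_left inv_solve_right)
    have "f (inv x \<otimes> \<psi> y) = f (inv y \<otimes> z)"
      unfolding e1 using conj_inv x z yc sym[of z "inv y"] by simp
    then show ?thesis using Q[OF y] e2 h1 h2 memI x z yc unfolding \<psi>_def by auto
  qed
  have A: "\<forall>y \<in> I. \<phi> y \<in> I" using Pmem by blast
  have B: "bij_betw \<phi> I I"
  proof (rule bij_betwI[where g = \<psi>])
    show "\<phi> \<in> I \<rightarrow> I" using Pmem by blast
    show "\<psi> \<in> I \<rightarrow> I" using Qmem by blast
    show "\<psi> (\<phi> y) = y" if "y \<in> I" for y
      using that memI x z unfolding \<phi>_def \<psi>_def by (simp add: inv_mult_group m_assoc inv_solve_left inv_solve_right)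
    show "\<phi> (\<psi> y) = y" if "y \<in> I" for y
      using that memI x z unfolding \<phi>_def \<psi>_def by (simp add: inv_mult_group m_assoc inv_solve_left inv_solve_right)
  qed
  have C: "f_le G f a b \<longleftrightarrow> f_le G f (\<phi> b) (\<phi> a)" if a: "a \<in> I" and b: "b \<in> I" for a b
  proof -
    have ac: "a \<in> carrier G" and bc: "b \<in> carrier G" using a b memI by auto
    have e: "inv (\<phi> b) \<otimes> \<phi> a = inv z \<otimes> (b \<otimes> inv a) \<otimes> z"
      unfolding \<phi>_def using x z ac bc by (simp add: inv_mult_group m_assoc inv_solve_left inv_solve_right)
    have "f (inv (\<phi> b) \<otimes> \<phi> a) = f (inv a \<otimes> b)"
      unfolding e using conj_inv x z ac bc sym[of b "inv a"] by simp
    then show ?thesis unfolding f_le_def using P[OF a] P[OF b] memI a b by auto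
  qed
  show ?thesis using A B C unfolding I_def \<phi>_def by auto
qed

end
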